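(* Let $\mathcal{G}=(N,\mathcal{W})$ be an SVG, let $i\neq j$ be players with $j$ a YES-blocker of $\mathcal{G}$, and let $\hat{\mathcal{G}}=\mathcal{G}^{j\to i}$. Let $S\subseteq N\setminus\{i,j\}$ satisfy $S\cup\{i,j\}\notin\mathcal{W}$. Then $$\hat\alpha^-_i(S\cup\{j\})\le \alpha^-_i(S\cup\{j\})+\alpha^-_j(S\cup\{i\}),$$ where $\alpha^-$ denotes NO-efficacy scores of the Recursive Measure in $\mathcal{G}$, and $\hat\alpha^-$ denotes the same in $\hat{\mathcal{G}}$.
   Context: A simple voting game (SVG) is a pair $\mathcal{G}=(N,\mathcal{W})$ with $N$ a nonempty finite set of players and $\mathcal{W}\subseteq 2^N$ monotone, $\emptyset\notin\mathcal{W}$, $N\in\mathcal{W}$. Divisions are identified with their YES-sets $S\subseteq N$; $S$ is winning iff $S\in\mathcal{W}$. Decisiveness and success: - Player $k$ is YES-decisive in $S$ if $k\in S\in\mathcal{W}$ and $S\setminus\{k\}\notin\mathcal{W}$. - Player $k$ is NO-decisive in $S$ if $k\notin S\notin\mathcal{W}$ and $S\cup\{k\}\in\mathcal{W}$. - Player $k$ is successful in $S$ if ($k\in S\in\mathcal{W}$) or ($k\notin S\notin\mathcal{W}$). Loyal children: if $S\in\mathcal{W}$, they are the sets $S\setminus\{m\}\in\mathcal{W}$ with $m\in S$. If $S\notin\mathcal{W}$, they are the sets $S\cup\{m\}\notin\mathcal{W}$ with $m\notin S$. Recursive efficacy score $\alpha_k(S)$: - $\alpha_k(S)=1$ if $k$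 is YES- or NO-decisive in $S$; - $\alpha_k(S)=0$ if $k$ is not successful; - otherwise, the average of $\alpha_k$ over the loyal children of $S$. The NO-efficacy score is $\alpha^-_k(S)=\alpha_k(S)$ if $k\notin S$ and $0$ if $k\in S$. Blockers: $j$ is a YES-blocker if $j\in S$ for all $S\in\mathcal{W}$. Donation game: $\mathcal{G}^{j\to i}$ is the SVG on $N$ in which, for $S\subseteq N\setminus\{i,j\}$: - $S\cup\{i,j\}$ and $S\cup\{i\}$ are winning iff $S\cup\{i,j\}\in\mathcal{W}$; - $S\cup\{j\}$ and $S$ are winning iff $S\in\mathcal{W}$. *)

theory Defs
  imports Complex_Main
begin

definition svg :: "'a set \<Rightarrow> 'a set set \<Rightarrow> bool" where
  "svg N W \<longleftrightarrow> finite N \<and> N \<noteq> {} \<and> W \<subseteq> Pow N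
     \<and> (\<forall>S T. S \<in> W \<and> S \<subseteq> T \<and> T \<subseteq> N \<longrightarrow> T \<in> W)
     \<and> {} \<notin> W \<and> N \<in> W"

definition yes_decisive :: "'a set set \<Rightarrow> 'a \<Rightarrow> 'a set \<Rightarrow> bool" where
  "yes_decisive W k S \<longleftrightarrow> k \<in> S \<and> S \<in> W \<and> S - {k} \<notin> W"

definition no_decisive :: "'a set set \<Rightarrow> 'a \<Rightarrow> 'a set \<Rightarrow> bool" where
  "no_decisive W k S \<longleftrightarrow> k \<notin> S \<and> S \<notin> W \<and> S \<union> {k} \<in> W"

definition successful :: "'a set set \<Rightarrow> 'a \<Rightarrow> 'a set \<Rightarrow> bool" where
  "successful W k S \<longleftrightarrow> (k \<in> S \<and> S \<in> W) \<or> (k \<notin> S \<and> S \<notin> W)"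

definition loyal_children :: "'a set \<Rightarrow> 'a set set \<Rightarrow> 'a set \<Rightarrow> 'a set set" where
  "loyal_children N W S =
     (if S \<in> W then {S - {m} | m. m \<in> S \<and> S - {m} \<in> W}
      else {S \<union> {m} | m. m \<in> N - S \<and> S \<union> {m} \<notin> W})"

definition alpha_measure :: "'a set \<Rightarrow> 'a set set \<Rightarrow> 'a set \<Rightarrow> nat" where
  "alpha_measure N W S = (if S \<in> W then card S else card (N - S))"

lemma loyal_children_dec:
  assumes "finite N" "S \<subseteq> N" "T \<in> loyal_children N W S"
  shows "alpha_measure N W T < alpha_measure N W S"
proof (cases "S \<in> W")
  case True
  then obtain m where "m \<in> S" "T = S - {m}" "T \<in> W"
    using assms(3) by (auto simp: loyal_children_def)
  moreover have "finite S" using assms finite_subset by blast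
  moreover have "card S > 0" using \<open>m \<in> S\<close> \<open>finite S\<close> card_gt_0_iff by blast
  ultimately show ?thesis using True
    by (simp add: alpha_measure_def)
next
  case False
  then obtain m where "m \<in> N - S" "T = S \<union> {m}" "T \<notin> W"
    using assms(3) by (auto simp: loyal_children_def)
  moreover have "N - (S \<union> {m}) = (N - S) - {m}" by blast
  moreover have "card (N - S) > 0" using \<open>m \<in> N - S\<close> assms(1) card_gt_0_iff by blast
  ultimately show ?thesis using False assms(1)
    by (simp add: alpha_measure_def)
qed

text \<open>Recursive efficacy score alpha_k(S) (the Recursive Measure); only meaningful for
  finite N and divisions S \<subseteq> N (set to 0 otherwise).\<close>
function alpha :: "'a set \<Rightarrow> 'a set set \<Rightarrow> 'a \<Rightarrow> 'a set \<Rightarrow> real" where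
  "alpha N W k S =
     (if \<not> finite N \<or> \<not> S \<subseteq> N then 0
      else if yes_decisive W k S \<or> no_decisive W k S then 1
      else if \<not> successful W k S then 0
      else (\<Sum>T\<in>loyal_children N W S. alpha N W k T) / real (card (loyal_children N W S)))"
  by pat_completeness auto
termination
  by (relation "measure (\<lambda>(N, W, k, S). alpha_measure N W S)")
     (auto intro: loyal_children_dec)

definition alpha_no :: "'a set \<Rightarrow> 'a set set \<Rightarrow> 'a \<Rightarrow> 'a set \<Rightarrow> real" where
  "alpha_no N W k S = (if k \<in> S then 0 else alpha N W k S)"

definition yes_blocker :: "'a set set \<Rightarrow> 'a \<Rightarrow> bool" where
  "yes_blocker W j \<longleftrightarrow> (\<forall>S\<in>W. j \<in> S)"

definition donation :: "'a set \<Rightarrow> 'a set set \<Rightarrow> 'a \<Rightarrow> 'a \<Rightarrow> 'a set set" where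
  "donation N W j i =
     {T. T \<subseteq> N \<and> (if i \<in> T then T \<union> {j} \<in> W else T - {j} \<in> W)}"

end

theory Submission
  imports Defs
begin

declare alpha.simps[simp del]

lemma alpha_nonneg: "0 \<le> alpha N W k S"
proof (induction N W k S rule: alpha.induct)
  case (1 N W k S)
  show ?case
    apply (subst alpha.simps)
    using 1 by (auto intro!: divide_nonneg_nonneg sum_nonneg)
qed

lemma alpha_zero: assumes "k \<in> S" "S \<notin> W" shows "alpha N W k S = 0"
  by (subst alpha.simps) (simp add: assms yes_decisive_def no_decisive_def successful_def)

lemma alpha_one: assumes "finite N" "S \<subseteq> N" "k \<notin> S" "S \<notin> W" "S \<union> {k} \<in> W"
  shows "alpha N W k S = 1"
proof -
  have nd: "no_decisive W k S" using assms by (simp add: no_decisive_def)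
  show ?thesis by (subst alpha.simps) (simp add: assms(1,2) nd)
qed

lemma alpha_lose: assumes "finite N" "S \<subseteq> N" "k \<notin> S" "S \<notin> W" "S \<union> {k} \<notin> W"
  shows "alpha N W k S = (\<Sum>m\<in>{m\<in>N-S. S\<union>{m}\<notin>W}. alpha N W k (S\<union>{m}))
            / real (card {m\<in>N-S. S\<union>{m}\<notin>W})"
proof -
  have lc: "loyal_children N W S = (\<lambda>m. S\<union>{m}) ` {m\<in>N-S. S\<union>{m}\<notin>W}"
    using assms by (auto simp: loyal_children_def)
  have inj: "inj_on (\<lambda>m. S\<union>{m}) {m\<in>N-S. S\<union>{m}\<notin>W}"
    unfolding inj_on_def by blast
  have a: "alpha N W k S = sum (alpha N W k) (loyal_children N W S) / real (card (loyal_children N W S))"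
    apply (subst alpha.simps)
    using assms by (simp add: yes_decisive_def no_decisive_def successful_def)
  have b: "sum (alpha N W k) ((\<lambda>m. S\<union>{m}) ` {m\<in>N-S. S\<union>{m}\<notin>W})
       = (\<Sum>m\<in>{m\<in>N-S. S\<union>{m}\<notin>W}. alpha N W k (S\<union>{m}))"
    using sum.reindex[OF inj, of "alpha N W k"] by (simp only: o_def)
  show ?thesis unfolding a lc b card_image[OF inj] ..
qed

lemma frac_arith:
  fixes a b c :: real and l r :: nat
  assumes "a \<le> b + c" "0 \<le> b" "l \<le> r"
  shows "a / real (r + 1) \<le> b / real (l + 1) + c / real (r + 1)"
proof -
  have "b / real (r + 1) \<le> b / real (l + 1)"
    using assms by (intro divide_left_mono) auto
  moreover have "a / real (r + 1) \<le> (b + c) / real (r + 1)"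
    using assms by (intro divide_right_mono) auto
  ultimately show ?thesis by (simp add: add_divide_distrib)
qed

lemma main:
  assumes fin: "finite N" and mono: "\<And>A B. A \<in> W \<Longrightarrow> A \<subseteq> B \<Longrightarrow> B \<subseteq> N \<Longrightarrow> B \<in> W"
    and blk: "\<And>A. A \<in> W \<Longrightarrow> j \<in> A"
    and V: "\<And>U. U \<subseteq> N \<Longrightarrow> U \<in> V \<longleftrightarrow> (i \<in> U \<and> U \<union> {j} \<in> W)"
    and iN: "i \<in> N" and jN: "j \<in> N" and ij: "i \<noteq> j"
  shows "T \<subseteq> N - {i, j} \<Longrightarrow> T \<union> {i, j} \<notin> W \<Longrightarrow>
    alpha N V i (T \<union> {j}) \<le> alpha N W i (T \<union> {j}) + alpha N W j (T \<union> {i})"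
proof (induction "card (N - T)" arbitrary: T rule: less_induct)
  case less
  define R where "R = N - T - {i, j}"
  define L where "L = {m\<in>R. T \<union> {j} \<union> {m} \<notin> W}"
  have finR: "finite R" using fin by (simp add: R_def)
  have LR: "L \<subseteq> R" by (auto simp: L_def)
  have TN: "T \<subseteq> N" and iT: "i \<notin> T" and jT: "j \<notin> T" using less.prems by auto
  have e1: "T \<union> {j} \<union> {i} = T \<union> {i, j}" "T \<union> {i} \<union> {j} = T \<union> {i, j}" by auto
  have notW1: "T \<union> {j} \<notin> W"
    using mono[of "T \<union> {j}" "T \<union> {i,j}"] less.prems TN iN jN by auto
  have notW2: "T \<union> {i} \<notin> W" using blk jT ij by auto
  have notV1: "T \<union> {j} \<notin> V" using V[of "T \<union> {j}"] TN jN iT ij by auto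
  have e2: "T \<union> {j} \<union> {i} \<union> {j} = T \<union> {i, j}" by auto
  have notV2: "T \<union> {j} \<union> {i} \<notin> V"
  proof
    assume "T \<union> {j} \<union> {i} \<in> V"
    then have "T \<union> {j} \<union> {i} \<union> {j} \<in> W" using V[of "T \<union> {j} \<union> {i}"] TN jN iN by blast
    then show False using e2 less.prems by simp
  qed
  have CV: "{m\<in>N-(T\<union>{j}). T\<union>{j}\<union>{m}\<notin>V} = insert i R"
  proof -
    have "T\<union>{j}\<union>{m}\<notin>V" if "m \<in> R" for m
      using V[of "T\<union>{j}\<union>{m}"] that TN jN iT ij by (auto simp: R_def)
    then show ?thesis using notV2 iN iT ij by (auto simp: R_def)
  qed
  have CWi: "{m\<in>N-(T\<union>{j}). T\<union>{j}\<union>{m}\<notin>W} = insert i L"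
    using e1 less.prems iN iT ij by (auto simp: L_def R_def)
  have CWj: "{m\<in>N-(T\<union>{i}). T\<union>{i}\<union>{m}\<notin>W} = insert j R"
  proof -
    have "T\<union>{i}\<union>{m}\<notin>W" if "m \<in> R" for m
      using blk[of "T\<union>{i}\<union>{m}"] that jT ij by (auto simp: R_def)
    then show ?thesis using e1 less.prems jN jT ij by (auto simp: R_def)
  qed
  have iR: "i \<notin> R" "j \<notin> R" "i \<notin> L" by (auto simp: R_def L_def)
  have finL: "finite L" using finR LR finite_subset by blast
  have hV: "alpha N V i (T \<union> {j}) = (\<Sum>m\<in>R. alpha N V i (T\<union>{j}\<union>{m})) / real (card R + 1)"
    apply (subst alpha_lose[OF fin])
    using TN jN iT ij notV1 notV2 apply auto[4]
    unfolding CV using finR iR alpha_zero[of i "T\<union>{j}\<union>{i}" V N] notV2 by simp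
  have hWi: "alpha N W i (T \<union> {j}) = (\<Sum>m\<in>L. alpha N W i (T\<union>{j}\<union>{m})) / real (card L + 1)"
    apply (subst alpha_lose[OF fin])
    using TN jN iT ij notW1 e1 less.prems apply auto[4]
    unfolding CWi using finL iR alpha_zero[of i "T\<union>{j}\<union>{i}" W N] e1 less.prems by simp
  have hWj: "alpha N W j (T \<union> {i}) = (\<Sum>m\<in>R. alpha N W j (T\<union>{i}\<union>{m})) / real (card R + 1)"
    apply (subst alpha_lose[OF fin])
    using TN iN jT ij notW2 e1 less.prems apply auto[4]
    unfolding CWj using finR iR alpha_zero[of j "T\<union>{i}\<union>{j}" W N] e1 less.prems by simp
  have pw: "alpha N V i (T\<union>{j}\<union>{m}) \<le> (if m \<in> L then alpha N W i (T\<union>{j}\<union>{m}) else 0)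
              + alpha N W j (T\<union>{i}\<union>{m})" if mR: "m \<in> R" for m
  proof -
    have mN: "m \<in> N" "m \<notin> T" "m \<noteq> i" "m \<noteq> j" using mR by (auto simp: R_def)
    have sub: "T \<union> {m} \<subseteq> N - {i, j}" using mN TN less.prems by auto
    have sN: "T \<union> {j} \<union> {m} \<subseteq> N" "T \<union> {i} \<union> {m} \<subseteq> N" using TN mN iN jN by auto
    have eqs: "T \<union> {m} \<union> {j} = T \<union> {j} \<union> {m}" "T \<union> {m} \<union> {i} = T \<union> {i} \<union> {m}"
      "T \<union> {j} \<union> {m} \<union> {i} = T \<union> {m} \<union> {i, j}"
      "T \<union> {i} \<union> {m} \<union> {j} = T \<union> {m} \<union> {i, j}"
      "T \<union> {j} \<union> {m} \<union> {i} \<union> {j} = T \<union> {m} \<union> {i, j}" by auto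
    have nV: "T \<union> {j} \<union> {m} \<notin> V" using V[OF sN(1)] mN iT ij by auto
    have nWj: "T \<union> {i} \<union> {m} \<notin> W" using blk[of "T \<union> {i} \<union> {m}"] mN jT ij by auto
    have nn: "0 \<le> alpha N W i (T\<union>{j}\<union>{m})" "0 \<le> alpha N W j (T\<union>{i}\<union>{m})"
      by (rule alpha_nonneg)+
    show ?thesis
    proof (cases "T \<union> {m} \<union> {i, j} \<in> W")
      case False
      have "card (N - (T \<union> {m})) < card (N - T)"
        using fin mN by (intro psubset_card_mono) auto
      from less.hyps[OF this sub False]
      have "alpha N V i (T\<union>{j}\<union>{m}) \<le> alpha N W i (T\<union>{j}\<union>{m}) + alpha N W j (T\<union>{i}\<union>{m})"
        by (simp only: eqs)
      moreover have "m \<in> L"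
        using mono[of "T \<union> {j} \<union> {m}" "T \<union> {m} \<union> {i, j}"] False mR sub iN jN
        unfolding L_def by auto
      ultimately show ?thesis by simp
    next
      case True
      have yV: "T \<union> {j} \<union> {m} \<union> {i} \<in> V"
        using V[of "T \<union> {j} \<union> {m} \<union> {i}"] sN iN True eqs by auto
      have one: "alpha N V i (T\<union>{j}\<union>{m}) = 1"
        using alpha_one[OF fin sN(1) _ nV yV] mN iT ij by auto
      show ?thesis
      proof (cases "m \<in> L")
        case True
        then have "T \<union> {j} \<union> {m} \<notin> W" by (simp add: L_def)
        then have "alpha N W i (T\<union>{j}\<union>{m}) = 1"
          using alpha_one[OF fin sN(1)] mN iT ij \<open>T \<union> {m} \<union> {i, j} \<in> W\<close> eqs by auto
        then show ?thesis using one True nn by simp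
      next
        case False
        then have "T \<union> {j} \<union> {m} \<in> W" using mR by (simp add: L_def)
        then have "T \<union> {i} \<union> {m} \<union> {j} \<in> W"
          using mono[of "T \<union> {j} \<union> {m}" "T \<union> {i} \<union> {m} \<union> {j}"] sN jN by auto
        then have "alpha N W j (T\<union>{i}\<union>{m}) = 1"
          using alpha_one[OF fin sN(2) _ nWj] mN jT ij by auto
        then show ?thesis using one False by simp
      qed
    qed
  qed
  have "(\<Sum>m\<in>R. alpha N V i (T\<union>{j}\<union>{m})) \<le>
        (\<Sum>m\<in>R. (if m \<in> L then alpha N W i (T\<union>{j}\<union>{m}) else 0) + alpha N W j (T\<union>{i}\<union>{m}))"
    by (rule sum_mono) (rule pw)
  also have "\<dots> = (\<Sum>m\<in>L. alpha N W i (T\<union>{j}\<union>{m})) + (\<Sum>m\<in>R. alpha N W j (T\<union>{i}\<union>{m}))"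
  proof -
    have "(\<Sum>m\<in>R. (if m \<in> L then alpha N W i (T\<union>{j}\<union>{m}) else 0)) = (\<Sum>m\<in>R\<inter>L. alpha N W i (T\<union>{j}\<union>{m}))"
      by (rule sum.inter_restrict[OF finR, symmetric])
    also have "R \<inter> L = L" using LR by blast
    finally show ?thesis by (simp only: sum.distrib)
  qed
  finally have S: "(\<Sum>m\<in>R. alpha N V i (T\<union>{j}\<union>{m})) \<le>
      (\<Sum>m\<in>L. alpha N W i (T\<union>{j}\<union>{m})) + (\<Sum>m\<in>R. alpha N W j (T\<union>{i}\<union>{m}))" .
  have "card L \<le> card R" using finR LR card_mono by blast
  moreover have "0 \<le> (\<Sum>m\<in>L. alpha N W i (T\<union>{j}\<union>{m}))" by (intro sum_nonneg alpha_nonneg)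
  ultimately show ?case unfolding hV hWi hWj by (intro frac_arith[OF S]) auto
qed

theorem claim2:
  fixes N :: "'a set" and W :: "'a set set" and i j :: 'a and S :: "'a set"
  assumes "svg N W"
    and "i \<in> N" and "j \<in> N" and "i \<noteq> j"
    and "yes_blocker W j"
    and "S \<subseteq> N - {i, j}"
    and "S \<union> {i, j} \<notin> W"
  shows "alpha_no N (donation N W j i) i (S \<union> {j})
           \<le> alpha_no N W i (S \<union> {j}) + alpha_no N W j (S \<union> {i})"
proof -
  have fin: "finite N" and mono: "\<And>A B. A \<in> W \<Longrightarrow> A \<subseteq> B \<Longrightarrow> B \<subseteq> N \<Longrightarrow> B \<in> W"
    using assms(1) unfolding svg_def by blast+
  have blk: "\<And>A. A \<in> W \<Longrightarrow> j \<in> A" using assms(5) by (auto simp: yes_blocker_def)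
  have V: "\<And>U. U \<subseteq> N \<Longrightarrow> U \<in> donation N W j i \<longleftrightarrow> (i \<in> U \<and> U \<union> {j} \<in> W)"
    using blk by (auto simp: donation_def)
  have "alpha N (donation N W j i) i (S \<union> {j}) \<le> alpha N W i (S \<union> {j}) + alpha N W j (S \<union> {i})"
    by (rule main[OF fin mono blk V assms(2-4) assms(6-7)]) auto
  moreover have "i \<notin> S \<union> {j}" "j \<notin> S \<union> {i}" using assms(4,6) by auto
  ultimately show ?thesis by (simp add: alpha_no_def)
qed

end
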